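(* Let $m\ge1$ be a fixed integer and let $G_n$ be the preferential attachment graph with parameter $m$. With probability $1-o(1)$ as $n\to\infty$, every vertex $i\in[n]$ with $d_n(i)\ge n^{1/2}/\log^{1/20}n$ satisfies $i\le n/\log^{1/39}n$.
   Context: Preferential attachment graph $G_n$ (Bollobás–Riordan construction): choose $x_1,\dots,x_{2mn}$ independently and uniformly from $[0,1]$; for $i=1,\dots,mn$ let $\{\ell_i,r_i\}=\{x_{2i-1},x_{2i}\}$ with $\ell_i<r_i$. Sort the $r_i$ as $R_1<\dots<R_{mn}$, put $R_0=0$, $W_j=R_{mj}$, $I_j=(W_{j-1},W_j]$. $G_n$ is the multigraph on $[n]$ with one edge $\{x,y\}$ ($x\le y$) for each pair with $\ell_i\in I_x$, $r_i\in I_y$. $d_n(i)$ is the degree of vertex $i$ in $G_n$. *)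

theory Defs
  imports "HOL-Probability.Probability"
begin

text \<open>Bollobas--Riordan preferential attachment graph G_n with parameter m.
  The sample point is omega :: nat => real; the variables x_1,...,x_{2mn} of the
  paper are omega 0, ..., omega (2mn-1), i.i.d. uniform on [0,1].\<close>

definition pa_space :: "nat \<Rightarrow> nat \<Rightarrow> (nat \<Rightarrow> real) measure" where
  "pa_space m n = PiM {..<2*m*n} (\<lambda>_. uniform_measure lborel {0..1::real})"

definition pa_left :: "(nat \<Rightarrow> real) \<Rightarrow> nat \<Rightarrow> real" where
  "pa_left \<omega> i = min (\<omega> (2*i)) (\<omega> (2*i+1))"

definition pa_right :: "(nat \<Rightarrow> real) \<Rightarrow> nat \<Rightarrow> real" where
  "pa_right \<omega> i = max (\<omega> (2*i)) (\<omega> (2*i+1))"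

definition pa_R :: "nat \<Rightarrow> nat \<Rightarrow> (nat \<Rightarrow> real) \<Rightarrow> nat \<Rightarrow> real" where
  "pa_R m n \<omega> k = (if k = 0 then 0 else sort (map (pa_right \<omega>) [0..<m*n]) ! (k - 1))"

definition pa_W :: "nat \<Rightarrow> nat \<Rightarrow> (nat \<Rightarrow> real) \<Rightarrow> nat \<Rightarrow> real" where
  "pa_W m n \<omega> j = pa_R m n \<omega> (m*j)"

definition pa_I :: "nat \<Rightarrow> nat \<Rightarrow> (nat \<Rightarrow> real) \<Rightarrow> nat \<Rightarrow> real set" where
  "pa_I m n \<omega> j = {pa_W m n \<omega> (j - 1) <.. pa_W m n \<omega> j}"

text \<open>Degree of vertex j in G_n: number of edge endpoints at j (a loop counts twice).\<close>
definition pa_degree :: "nat \<Rightarrow> nat \<Rightarrow> (nat \<Rightarrow> real) \<Rightarrow> nat \<Rightarrow> nat" where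
  "pa_degree m n \<omega> j =
     card {i. i < m*n \<and> pa_left \<omega> i \<in> pa_I m n \<omega> j}
   + card {i. i < m*n \<and> pa_right \<omega> i \<in> pa_I m n \<omega> j}"

end

theory Submission
  imports Defs "HOL-Real_Asymp.Real_Asymp"
begin

definition U :: "real measure" where "U = uniform_measure lborel {0..1}"

lemma prob_space_U: "prob_space U"
  unfolding U_def by (rule prob_space_uniform_measure) auto

lemma sets_U[simp, measurable_cong]: "sets U = sets borel"
  unfolding U_def by simp

lemma space_U[simp]: "space U = UNIV"
  unfolding U_def by simp

lemma measure_U: "A \<in> sets borel \<Longrightarrow> measure U A = measure lborel ({0..1} \<inter> A)"
  unfolding U_def by (subst measure_uniform_measure) auto


lemma pa_space_U: "pa_space m n = PiM {..<2*m*n} (\<lambda>_. U)"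
  unfolding pa_space_def U_def ..

lemma prob_space_PiU: "prob_space (PiM I (\<lambda>_. U))"
  by (rule prob_space_PiM) (rule prob_space_U)

lemma indep_coords:
  assumes "I \<noteq> {}"
  shows "prob_space.indep_vars (PiM I (\<lambda>_. U)) (\<lambda>_. U) (\<lambda>k \<omega>. \<omega> k) I"
proof -
  interpret P: prob_space "PiM I (\<lambda>_. U)" by (rule prob_space_PiU)
  show ?thesis
  proof (subst P.indep_vars_iff_distr_eq_PiM[OF assms])
    show "P.random_variable U (\<lambda>\<omega>. \<omega> i)" for i
    proof (cases "i \<in> I")
      case True then show ?thesis using measurable_component_singleton[OF True, of "\<lambda>_. U"] by simp
    next
      case False
      have "(\<lambda>\<omega>. undefined) \<in> measurable (PiM I (\<lambda>_. U)) U" by simp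
      moreover have "\<omega> \<in> space (PiM I (\<lambda>_. U)) \<Longrightarrow> \<omega> i = undefined" for \<omega>
        using False by (auto simp: space_PiM PiE_def extensional_def)
      ultimately show ?thesis using measurable_cong[of "PiM I (\<lambda>_. U)" "\<lambda>\<omega>. \<omega> i" "\<lambda>\<omega>. undefined" U] by simp
    qed
    have "distr (PiM I (\<lambda>_. U)) (PiM I (\<lambda>_. U)) (\<lambda>x. restrict x I) = distr (PiM I (\<lambda>_. U)) (PiM I (\<lambda>_. U)) (\<lambda>x. x)"
      by (rule distr_cong) (auto simp: space_PiM)
    also have "\<dots> = PiM I (\<lambda>_. U)" by simp
    also have "\<dots> = PiM I (\<lambda>i. distr (PiM I (\<lambda>_. U)) U (\<lambda>x. x i))"
      by (rule PiM_cong) (simp_all add: distr_PiM_component[of I "\<lambda>_. U", OF prob_space_U])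
    finally show "distr (PiM I (\<lambda>_. U)) (PiM I (\<lambda>_. U)) (\<lambda>x. \<lambda>i\<in>I. x i) = PiM I (\<lambda>i. distr (PiM I (\<lambda>_. U)) U (\<lambda>x. x i))" by simp
  qed
qed

lemma comp_meas[measurable]: "k \<in> I \<Longrightarrow> (\<lambda>\<omega>. \<omega> k) \<in> borel_measurable (PiM I (\<lambda>_. U))"
proof -
  assume "k \<in> I"
  from measurable_component_singleton[OF this, of "\<lambda>_. U"]
  show ?thesis by (subst measurable_cong_sets[OF refl sets_U[symmetric]])
qed

lemma prob_coord:
  assumes "k \<in> I" "A \<in> sets borel"
  shows "measure (PiM I (\<lambda>_. U)) ((\<lambda>\<omega>. \<omega> k) -` A \<inter> space (PiM I (\<lambda>_. U))) = measure U A"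
proof -
  have m: "(\<lambda>\<omega>. \<omega> k) \<in> measurable (PiM I (\<lambda>_. U)) U"
    using measurable_component_singleton[OF assms(1), of "\<lambda>_. U"] by simp
  have "measure U A = measure (distr (PiM I (\<lambda>_. U)) U (\<lambda>\<omega>. \<omega> k)) A"
    by (simp add: distr_PiM_component[of I "\<lambda>_. U", OF prob_space_U assms(1)])
  also have "\<dots> = measure (PiM I (\<lambda>_. U)) ((\<lambda>\<omega>. \<omega> k) -` A \<inter> space (PiM I (\<lambda>_. U)))"
    by (rule measure_distr[OF m]) (use assms in simp)
  finally show ?thesis by simp
qed

lemma prob_rect:
  assumes "finite J" "J \<noteq> {}" "J \<subseteq> I" "\<And>k. k \<in> J \<Longrightarrow> A k \<in> sets borel"
  shows "measure (PiM I (\<lambda>_. U)) {\<omega> \<in> space (PiM I (\<lambda>_. U)). \<forall>k\<in>J. \<omega> k \<in> A k} = (\<Prod>k\<in>J. measure U (A k))"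
proof -
  interpret P: prob_space "PiM I (\<lambda>_. U)" by (rule prob_space_PiU)
  have I: "I \<noteq> {}" using assms by auto
  have "{\<omega> \<in> space (PiM I (\<lambda>_. U)). \<forall>k\<in>J. \<omega> k \<in> A k} = (\<Inter>k\<in>J. (\<lambda>\<omega>. \<omega> k) -` A k \<inter> space (PiM I (\<lambda>_. U)))"
    using assms(2) by auto
  also have "P.prob \<dots> = (\<Prod>k\<in>J. P.prob ((\<lambda>\<omega>. \<omega> k) -` A k \<inter> space (PiM I (\<lambda>_. U))))"
    by (rule P.indep_varsD[OF indep_coords[OF I]]) (use assms in auto)
  also have "\<dots> = (\<Prod>k\<in>J. measure U (A k))"
    by (rule prod.cong) (use assms in \<open>auto intro!: prob_coord\<close>)
  finally show ?thesis .
qed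

lemma measure_U_Ico_le: "a \<le> b \<Longrightarrow> measure U {a..<b} \<le> b - a"
proof -
  assume "a \<le> b"
  have "measure U {a..<b} = measure lborel ({0..1} \<inter> {a..<b})" by (simp add: measure_U)
  also have "\<dots> \<le> measure lborel {a..<b}"
    by (rule measure_mono_fmeasurable) (use \<open>a \<le> b\<close> in \<open>auto simp: fmeasurable_def emeasure_lborel_Ico\<close>)
  also have "\<dots> = b - a" using \<open>a \<le> b\<close> by simp
  finally show ?thesis .
qed

lemma measure_U_Ico: "0 \<le> a \<Longrightarrow> a \<le> b \<Longrightarrow> b \<le> 1 \<Longrightarrow> measure U {a..<b} = b - a"
proof -
  assume *: "0 \<le> a" "a \<le> b" "b \<le> 1"
  then have "{0..1} \<inter> {a..<b} = {a..<b}" by auto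
  then show ?thesis using * by (simp add: measure_U)
qed

lemma measure_U_lessThan: "0 \<le> u \<Longrightarrow> u \<le> 1 \<Longrightarrow> measure U {..<u} = u"
proof -
  assume *: "0 \<le> u" "u \<le> 1"
  then have "{0..1} \<inter> {..<u} = {0..<u}" by auto
  then show ?thesis using * by (simp add: measure_U)
qed

lemma prob_pair:
  fixes l :: nat
  assumes "2*l+1 \<in> I" "2*l \<in> I" "0 \<le> u" "0 \<le> h" "u + h \<le> 1"
  shows "measure (PiM I (\<lambda>_. U)) {\<omega> \<in> space (PiM I (\<lambda>_. U)). \<omega> (2*l) \<in> {u..<u+h} \<and> \<omega> (2*l+1) < u} = h * u"
proof -
  let ?A = "\<lambda>k. if k = 2*l then {u..<u+h} else {..<u}"
  have "{\<omega> \<in> space (PiM I (\<lambda>_. U)). \<omega> (2*l) \<in> {u..<u+h} \<and> \<omega> (2*l+1) < u}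
     = {\<omega> \<in> space (PiM I (\<lambda>_. U)). \<forall>k\<in>{2*l, 2*l+1}. \<omega> k \<in> ?A k}" by auto
  also have "measure (PiM I (\<lambda>_. U)) \<dots> = (\<Prod>k\<in>{2*l, 2*l+1}. measure U (?A k))"
    by (rule prob_rect) (use assms in auto)
  also have "\<dots> = h * u" using assms by (simp add: measure_U_Ico measure_U_lessThan)
  finally show ?thesis .
qed

lemma prob_no_pair:
  assumes "N \<ge> 1" "0 \<le> u" "0 \<le> h" "u + h \<le> 1"
  shows "measure (PiM {..<2*N} (\<lambda>_. U)) {\<omega> \<in> space (PiM {..<2*N} (\<lambda>_. U)). \<forall>l<N. \<not> (\<omega> (2*l) \<in> {u..<u+h} \<and> \<omega> (2*l+1) < u)} = (1 - h * u) ^ N"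
proof -
  let ?M = "PiM {..<2*N} (\<lambda>_. U)"
  interpret P: prob_space ?M by (rule prob_space_PiU)
  have "0 \<in> {..<2*N}" using assms by simp
  then have I: "{..<2*N} \<noteq> {}" by blast
  let ?K = "\<lambda>l::nat. {2*l, 2*l+1}"
  have ind: "P.indep_vars (\<lambda>l. PiM (?K l) (\<lambda>_. U)) (\<lambda>l \<omega>. restrict (\<lambda>i. \<omega> i) (?K l)) {..<N}"
    by (rule P.indep_vars_restrict[OF indep_coords[OF I]])
       (auto simp: disjoint_family_on_def)
  let ?A = "\<lambda>l. {y \<in> space (PiM (?K l) (\<lambda>_. U)). \<not> (y (2*l) \<in> {u..<u+h} \<and> y (2*l+1) < u)}"
  have As: "?A l \<in> sets (PiM (?K l) (\<lambda>_. U))" for l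
  proof -
    have a: "(\<lambda>y. y (2*l)) \<in> borel_measurable (PiM (?K l) (\<lambda>_. U))"
      using measurable_component_singleton[of "2*l" "?K l" "\<lambda>_. U"] by simp
    have b: "(\<lambda>y. y (2*l+1)) \<in> borel_measurable (PiM (?K l) (\<lambda>_. U))"
      using measurable_component_singleton[of "2*l+1" "?K l" "\<lambda>_. U"] by simp
    show ?thesis using a b by measurable
  qed
  have eq: "{\<omega> \<in> space ?M. \<forall>l<N. \<not> (\<omega> (2*l) \<in> {u..<u+h} \<and> \<omega> (2*l+1) < u)}
     = (\<Inter>l\<in>{..<N}. (\<lambda>\<omega>. restrict (\<lambda>i. \<omega> i) (?K l)) -` ?A l \<inter> space ?M)"
  proof -
    have "0 \<in> {..<N}" using assms by simp
    then show ?thesis by (auto simp: space_PiM)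
  qed
  have pr: "P.prob (\<Inter>l\<in>{..<N}. (\<lambda>\<omega>. restrict (\<lambda>i. \<omega> i) (?K l)) -` ?A l \<inter> space ?M) = (\<Prod>l\<in>{..<N}. P.prob ((\<lambda>\<omega>. restrict (\<lambda>i. \<omega> i) (?K l)) -` ?A l \<inter> space ?M))"
  proof -
    have "0 \<in> {..<N}" using assms by simp
    then have "{..<N} \<noteq> {}" by blast
    then show ?thesis
      apply (rule P.indep_varsD[OF ind])
      apply simp
      apply simp
      apply (rule As)
      done
  qed
  have each: "P.prob ((\<lambda>\<omega>. restrict (\<lambda>i. \<omega> i) (?K l)) -` ?A l \<inter> space ?M) = 1 - h * u" if l: "l < N" for l
  proof -
    have e2: "(\<lambda>\<omega>. restrict (\<lambda>i. \<omega> i) (?K l)) -` ?A l \<inter> space ?M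
       = space ?M - {\<omega> \<in> space ?M. \<omega> (2*l) \<in> {u..<u+h} \<and> \<omega> (2*l+1) < u}"
      by (auto simp: space_PiM)
    have a: "(\<lambda>y. y (2*l)) \<in> borel_measurable ?M"
      using measurable_component_singleton[of "2*l" "{..<2*N}" "\<lambda>_. U"] l by simp
    have b: "(\<lambda>y. y (2*l+1)) \<in> borel_measurable ?M"
      using measurable_component_singleton[of "2*l+1" "{..<2*N}" "\<lambda>_. U"] l by simp
    have ev: "{\<omega> \<in> space ?M. \<omega> (2*l) \<in> {u..<u+h} \<and> \<omega> (2*l+1) < u} \<in> P.events"
      using a b by measurable
    have "P.prob (space ?M - {\<omega> \<in> space ?M. \<omega> (2*l) \<in> {u..<u+h} \<and> \<omega> (2*l+1) < u}) = 1 - P.prob {\<omega> \<in> space ?M. \<omega> (2*l) \<in> {u..<u+h} \<and> \<omega> (2*l+1) < u}"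
      by (rule P.prob_compl[OF ev])
    moreover have "P.prob {\<omega> \<in> space ?M. \<omega> (2*l) \<in> {u..<u+h} \<and> \<omega> (2*l+1) < u} = h * u"
      by (rule prob_pair) (use l assms in auto)
    ultimately show ?thesis unfolding e2 by simp
  qed
  show ?thesis unfolding eq pr using each by simp
qed

lemma sets_all_in:
  assumes "finite S" "S \<subseteq> I" "C \<in> sets borel"
  shows "{\<omega> \<in> space (PiM I (\<lambda>_. U)). \<forall>k\<in>S. \<omega> k \<in> C} \<in> sets (PiM I (\<lambda>_. U))"
proof -
  have m: "\<And>k. k \<in> S \<Longrightarrow> (\<lambda>\<omega>. \<omega> k) \<in> borel_measurable (PiM I (\<lambda>_. U))"
  proof -
    fix k assume "k \<in> S"
    then have "k \<in> I" using assms(2) by auto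
    then show "(\<lambda>\<omega>. \<omega> k) \<in> borel_measurable (PiM I (\<lambda>_. U))" by (rule comp_meas)
  qed
  show ?thesis using assms(1) m assms(3) by measurable
qed

lemma prob_many_in:
  assumes "a \<le> b" "s \<ge> 1"
  shows "measure (PiM {..<d} (\<lambda>_. U)) {\<omega> \<in> space (PiM {..<d} (\<lambda>_. U)). s \<le> card {k \<in> {..<d}. \<omega> k \<in> {a..<b}}}
     \<le> (real d * (b - a)) ^ s"
proof -
  let ?M = "PiM {..<d} (\<lambda>_. U)"
  interpret P: prob_space ?M by (rule prob_space_PiU)
  let ?Ss = "{S. S \<subseteq> {..<d} \<and> card S = s}"
  let ?E = "\<lambda>S. {\<omega> \<in> space ?M. \<forall>k\<in>S. \<omega> k \<in> {a..<b}}"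
  have fin: "finite ?Ss" by (rule finite_subset[of _ "Pow {..<d}"]) auto
  have Es: "?E S \<in> P.events" if "S \<in> ?Ss" for S
    using that by (intro sets_all_in) (auto intro: finite_subset)
  have sub: "{\<omega> \<in> space ?M. s \<le> card {k \<in> {..<d}. \<omega> k \<in> {a..<b}}} \<subseteq> (\<Union>S\<in>?Ss. ?E S)"
  proof
    fix \<omega> assume "\<omega> \<in> {\<omega> \<in> space ?M. s \<le> card {k \<in> {..<d}. \<omega> k \<in> {a..<b}}}"
    then have w: "\<omega> \<in> space ?M" "s \<le> card {k \<in> {..<d}. \<omega> k \<in> {a..<b}}" by auto
    obtain S where "S \<subseteq> {k \<in> {..<d}. \<omega> k \<in> {a..<b}}" "card S = s"
      using obtain_subset_with_card_n[OF w(2)] by blast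
    then show "\<omega> \<in> (\<Union>S\<in>?Ss. ?E S)" using w(1) by auto
  qed
  have "P.prob {\<omega> \<in> space ?M. s \<le> card {k \<in> {..<d}. \<omega> k \<in> {a..<b}}} \<le> P.prob (\<Union>S\<in>?Ss. ?E S)"
    by (rule P.finite_measure_mono[OF sub]) (use fin Es in auto)
  also have "\<dots> \<le> (\<Sum>S\<in>?Ss. P.prob (?E S))"
    by (rule P.finite_measure_subadditive_finite) (use fin Es in auto)
  also have "\<dots> \<le> (\<Sum>S\<in>?Ss. (b - a) ^ s)"
  proof (rule sum_mono)
    fix S assume S: "S \<in> ?Ss"
    then have fS: "finite S" by (auto intro: finite_subset)
    have ne: "S \<noteq> {}" using S assms(2) by auto
    have "P.prob (?E S) = (\<Prod>k\<in>S. measure U {a..<b})"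
      by (rule prob_rect) (use S fS ne in auto)
    also have "\<dots> = measure U {a..<b} ^ s" using S by simp
    also have "\<dots> \<le> (b - a) ^ s"
      by (rule power_mono[OF measure_U_Ico_le[OF assms(1)]]) simp
    finally show "P.prob (?E S) \<le> (b - a) ^ s" .
  qed
  also have "\<dots> = real (d choose s) * (b - a) ^ s"
    by (simp add: n_subsets)
  also have "\<dots> \<le> real d ^ s * (b - a) ^ s"
  proof (rule mult_right_mono)
    have "d choose s \<le> d ^ s"
      by (cases "s \<le> d") (auto simp: binomial_le_pow binomial_eq_0)
    then show "real (d choose s) \<le> real d ^ s" by (metis of_nat_le_iff of_nat_power)
  qed (use assms(1) in simp)
  also have "\<dots> = (real d * (b - a)) ^ s" by (simp add: power_mult_distrib)
  finally show ?thesis .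
qed

lemma card_as_sum: fixes N :: nat shows "real (card {l. l < N \<and> P l}) = (\<Sum>l<N. if P l then 1 else 0)"
proof -
  have "{l. l < N \<and> P l} = {l \<in> {..<N}. P l}" by auto
  then have "real (card {l. l < N \<and> P l}) = (\<Sum>l\<in>{l \<in> {..<N}. P l}. 1)" by simp
  also have "\<dots> = (\<Sum>l<N. if P l then 1 else 0)" by (rule sum.inter_filter) simp
  finally show ?thesis .
qed

lemma prob_few_small:
  assumes "0 \<le> \<delta>" "\<delta> \<le> 1" "c > 0"
  shows "measure (PiM {..<2*N} (\<lambda>_. U)) {\<omega> \<in> space (PiM {..<2*N} (\<lambda>_. U)).
            c \<le> real (card {l. l < N \<and> \<omega> (2*l) < \<delta> \<and> \<omega> (2*l+1) < \<delta>})} \<le> real N * \<delta>^2 / c"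
proof -
  let ?M = "PiM {..<2*N} (\<lambda>_. U)"
  interpret P: prob_space ?M by (rule prob_space_PiU)
  let ?E = "\<lambda>l. {\<omega> \<in> space ?M. \<omega> (2*l) < \<delta> \<and> \<omega> (2*l+1) < \<delta>}"
  let ?u = "\<lambda>\<omega>. (\<Sum>l<N. indicator (?E l) \<omega> :: real)"
  have Es: "?E l \<in> P.events" if "l < N" for l
  proof -
    have a: "(\<lambda>\<omega>. \<omega> (2*l)) \<in> borel_measurable ?M" "(\<lambda>\<omega>. \<omega> (2*l+1)) \<in> borel_measurable ?M"
      using that by (auto intro!: comp_meas)
    show ?thesis using a by measurable
  qed
  have inti: "integrable ?M (indicator (?E l) :: _ \<Rightarrow> real)" if "l \<in> {..<N}" for l
      using Es[of l] that by (intro integrable_real_indicator) (auto simp: P.emeasure_eq_measure)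
  have int: "integrable ?M ?u"
  proof -
    have "integrable ?M (indicator (?E l) :: _ \<Rightarrow> real)" if "l \<in> {..<N}" for l
      using Es[of l] that by (intro integrable_real_indicator) (auto simp: P.emeasure_eq_measure)
    then show ?thesis by (rule Bochner_Integration.integrable_sum)
  qed
  have mk: "P.prob {\<omega> \<in> space ?M. ?u \<omega> \<ge> c} \<le> (\<integral>\<omega>. ?u \<omega> \<partial>?M) / c"
    by (rule integral_Markov_inequality_measure[OF int, of "space ?M"]) (use assms in \<open>auto intro!: AE_I2 sum_nonneg\<close>)
  have ig: "(\<integral>\<omega>. ?u \<omega> \<partial>?M) = (\<Sum>l<N. P.prob (?E l))"
    by (subst Bochner_Integration.integral_sum) (use Es inti in auto)
  have pe: "P.prob (?E l) = \<delta>^2" if l: "l < N" for l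
  proof -
    have e: "?E l = {\<omega> \<in> space ?M. \<forall>k\<in>{2*l, 2*l+1}. \<omega> k \<in> {..<\<delta>}}" by auto
    have "P.prob {\<omega> \<in> space ?M. \<forall>k\<in>{2*l, 2*l+1}. \<omega> k \<in> {..<\<delta>}} = (\<Prod>k\<in>{2*l, 2*l+1}. measure U {..<\<delta>})"
      by (rule prob_rect) (use l in auto)
    then show ?thesis unfolding e using assms by (simp add: measure_U_lessThan power2_eq_square)
  qed
  have *: "P.prob {\<omega> \<in> space ?M. ?u \<omega> \<ge> c} \<le> real N * \<delta>^2 / c"
  proof -
    have "(\<Sum>l<N. P.prob (?E l)) = (\<Sum>l<N. \<delta>^2)" by (rule sum.cong) (use pe in force)+
    then show ?thesis using mk unfolding ig by simp
  qed
  have "{\<omega> \<in> space ?M. c \<le> real (card {l. l < N \<and> \<omega> (2*l) < \<delta> \<and> \<omega> (2*l+1) < \<delta>})}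
      = {\<omega> \<in> space ?M. ?u \<omega> \<ge> c}"
  proof (rule set_eqI)
    fix \<omega>
    have "\<omega> \<in> space ?M \<Longrightarrow> real (card {l. l < N \<and> \<omega> (2*l) < \<delta> \<and> \<omega> (2*l+1) < \<delta>}) = ?u \<omega>"
      unfolding card_as_sum by (rule sum.cong) (auto simp: indicator_def)
    then show "\<omega> \<in> {\<omega> \<in> space ?M. c \<le> real (card {l. l < N \<and> \<omega> (2*l) < \<delta> \<and> \<omega> (2*l+1) < \<delta>})} \<longleftrightarrow> \<omega> \<in> {\<omega> \<in> space ?M. ?u \<omega> \<ge> c}"
      by auto
  qed
  then show ?thesis using * by simp
qed

lemma prob_outside:
  fixes d :: nat shows "measure (PiM {..<d} (\<lambda>_. U)) {\<omega> \<in> space (PiM {..<d} (\<lambda>_. U)). \<exists>k<d. \<omega> k \<notin> {0..1}} = 0"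
proof -
  let ?M = "PiM {..<d} (\<lambda>_. U)"
  interpret P: prob_space ?M by (rule prob_space_PiU)
  let ?E = "\<lambda>k. (\<lambda>\<omega>. \<omega> k) -` (- {0..1}) \<inter> space ?M"
  have Es: "?E k \<in> P.events" if "k < d" for k
    using that by (intro measurable_sets[OF comp_meas]) auto
  have "{\<omega> \<in> space ?M. \<exists>k<d. \<omega> k \<notin> {0..1}} = (\<Union>k\<in>{..<d}. ?E k)" by auto
  moreover have "P.prob (\<Union>k\<in>{..<d}. ?E k) \<le> (\<Sum>k<d. P.prob (?E k))"
    by (rule P.finite_measure_subadditive_finite) (use Es in auto)
  moreover have "P.prob (?E k) = 0" if "k < d" for k
    using that by (subst prob_coord) (auto simp: measure_U)
  ultimately show ?thesis by (simp add: measure_nonneg antisym)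
qed


lemma sorted_nth_less_iff:
  fixes xs :: "real list"
  assumes "sorted xs" "k < length xs"
  shows "xs ! k < x \<longleftrightarrow> k < length (filter (\<lambda>z. z < x) xs)"
  using assms
proof (induction xs arbitrary: k)
  case Nil then show ?case by simp
next
  case (Cons a xs)
  show ?case
  proof (cases "a < x")
    case True
    then show ?thesis using Cons by (cases k) auto
  next
    case False
    have "filter (\<lambda>z. z < x) xs = []" using Cons.prems False by (auto simp: filter_empty_conv)
    moreover have "\<not> (a # xs) ! k < x" using Cons.prems False
      by (cases k) (auto simp: nth_mem dest!: nth_mem[of _ xs])
    ultimately show ?thesis using False by simp
  qed
qed

definition cnt :: "nat \<Rightarrow> (nat \<Rightarrow> real) \<Rightarrow> real \<Rightarrow> nat" where
  "cnt N \<omega> x = card {l. l < N \<and> pa_right \<omega> l < x}"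

lemma pa_R_less_iff:
  assumes "1 \<le> k" "k \<le> m * n"
  shows "pa_R m n \<omega> k < x \<longleftrightarrow> k \<le> cnt (m*n) \<omega> x"
proof -
  let ?ys = "map (pa_right \<omega>) [0..<m*n]"
  have "pa_R m n \<omega> k = sort ?ys ! (k - 1)" using assms by (simp add: pa_R_def)
  moreover have "sort ?ys ! (k - 1) < x \<longleftrightarrow> k - 1 < length (filter (\<lambda>z. z < x) (sort ?ys))"
    by (rule sorted_nth_less_iff) (use assms in auto)
  moreover have "length (filter (\<lambda>z. z < x) (sort ?ys)) = length (filter (\<lambda>z. z < x) ?ys)"
    by (metis mset_filter mset_sort size_mset)
  moreover have "length (filter (\<lambda>z. z < x) ?ys) = cnt (m*n) \<omega> x"
    unfolding cnt_def length_filter_conv_card by (rule arg_cong[where f=card]) auto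
  ultimately show ?thesis using assms by auto
qed

lemma mem_pa_I:
  assumes "1 \<le> j" "j \<le> n" "1 \<le> m"
  shows "x \<in> pa_I m n \<omega> j \<longleftrightarrow> (if j = 1 then 0 < x else m*(j-1) \<le> cnt (m*n) \<omega> x) \<and> cnt (m*n) \<omega> x < m*j"
proof -
  have mj: "1 \<le> m*j" "m*j \<le> m*n" using assms by auto
  have "x \<le> pa_W m n \<omega> j \<longleftrightarrow> cnt (m*n) \<omega> x < m*j"
    using pa_R_less_iff[OF mj, of \<omega> x] by (auto simp: pa_W_def)
  moreover have "pa_W m n \<omega> (j-1) < x \<longleftrightarrow> (if j = 1 then 0 < x else m*(j-1) \<le> cnt (m*n) \<omega> x)"
  proof (cases "j = 1")
    case True then show ?thesis by (simp add: pa_W_def pa_R_def)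
  next
    case False
    then have "1 \<le> m*(j-1)" "m*(j-1) \<le> m*n" using assms by auto
    from pa_R_less_iff[OF this, of \<omega> x] False show ?thesis by (simp add: pa_W_def)
  qed
  ultimately show ?thesis unfolding pa_I_def by auto
qed

lemma endpoints_card:
  fixes N :: nat
  shows "real (card {i. i < N \<and> pa_left \<omega> i \<in> S}) + real (card {i. i < N \<and> pa_right \<omega> i \<in> S})
       = real (card {k. k < 2*N \<and> \<omega> k \<in> S})"
proof (induction N)
  case 0 then show ?case by simp
next
  case (Suc N)
  have e: "(if pa_left \<omega> N \<in> S then 1 else 0) + (if pa_right \<omega> N \<in> S then 1 else 0)
      = (if \<omega> (2*N) \<in> S then 1 else 0) + (if \<omega> (2*N+1) \<in> S then (1::real) else 0)"
    unfolding pa_left_def pa_right_def by (cases "\<omega> (2*N) \<le> \<omega> (2*N+1)") (auto simp: min_def max_def)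
  have "2 * Suc N = Suc (Suc (2*N))" by simp
  then show ?case using Suc e unfolding card_as_sum by (simp add: algebra_simps)
qed

lemma pa_degree_eq:
  "real (pa_degree m n \<omega> j) = real (card {k. k < 2*(m*n) \<and> \<omega> k \<in> pa_I m n \<omega> j})"
  unfolding pa_degree_def using endpoints_card[of "m*n" \<omega> "pa_I m n \<omega> j"] by simp

lemma nat_floor_bounds: "0 \<le> x \<Longrightarrow> real (nat \<lfloor>x\<rfloor>) \<le> x \<and> x < real (nat \<lfloor>x\<rfloor>) + 1"
  by (simp add: of_nat_nat)

lemma nat_ceil_bounds: "0 \<le> x \<Longrightarrow> x \<le> real (nat \<lceil>x\<rceil>) \<and> real (nat \<lceil>x\<rceil>) < x + 1"
  by (simp add: of_nat_nat) linarith

lemma cnt_mono: "x \<le> y \<Longrightarrow> cnt N \<omega> x \<le> cnt N \<omega> y"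
  unfolding cnt_def by (rule card_mono) auto

lemma cnt_diff: "x \<le> y \<Longrightarrow> cnt N \<omega> y = cnt N \<omega> x + card {l. l < N \<and> x \<le> pa_right \<omega> l \<and> pa_right \<omega> l < y}"
proof -
  assume "x \<le> y"
  have "{l. l < N \<and> pa_right \<omega> l < y} = {l. l < N \<and> pa_right \<omega> l < x} \<union> {l. l < N \<and> x \<le> pa_right \<omega> l \<and> pa_right \<omega> l < y}"
    using \<open>x \<le> y\<close> by auto
  moreover have "card (\<dots>) = card {l. l < N \<and> pa_right \<omega> l < x} + card {l. l < N \<and> x \<le> pa_right \<omega> l \<and> pa_right \<omega> l < y}"
    by (rule card_Un_disjoint) auto
  ultimately show ?thesis unfolding cnt_def by simp
qed

lemma deterministic:
  fixes m n j T :: nat and \<omega> :: "nat \<Rightarrow> real" and \<delta> h h3 K B :: real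
  assumes m: "1 \<le> m"
  and G0: "\<forall>k<2*(m*n). 0 \<le> \<omega> k \<and> \<omega> k \<le> 1"
  and G1: "real (card {l. l < m*n \<and> \<omega> (2*l) < \<delta> \<and> \<omega> (2*l+1) < \<delta>}) < real m * (B - 1)"
  and G2: "\<forall>t::nat. \<delta> \<le> real t * h \<and> real t * h + h \<le> 1 \<longrightarrow>
              (\<exists>l<m*n. \<omega> (2*l) \<in> {real t * h..<real t * h + h} \<and> \<omega> (2*l+1) < real t * h)"
  and G3: "\<forall>t::nat. t \<le> T \<longrightarrow> card {k. k < 2*(m*n) \<and> \<omega> k \<in> {real t * h3..<real t * h3 + h3}} < 6"
  and pos: "0 < \<delta>" "0 < h" "0 < h3" "1 / h3 \<le> real T" and B1: "1 \<le> B"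
  and Kb: "5 * ((real m + 2) * h / h3 + 2) < K"
  and j: "1 \<le> j" "j \<le> n" "B < real j"
  shows "real (pa_degree m n \<omega> j) < K"
proof (rule ccontr)
  define N where "N = m*n"
  assume "\<not> real (pa_degree m n \<omega> j) < K"
  then have KA: "K \<le> real (card {k. k < 2*N \<and> \<omega> k \<in> pa_I m n \<omega> j})"
    using pa_degree_eq[of m n \<omega> j] by (simp add: N_def)
  define A where "A = {k. k < 2*N \<and> \<omega> k \<in> pa_I m n \<omega> j}"
  have j2: "j \<noteq> 1" using j B1 by auto
  have finA: "finite A" unfolding A_def by auto
  have Kpos: "0 < K" using Kb pos by (smt (verit) divide_nonneg_pos mult_nonneg_nonneg of_nat_0_le_iff)
  have "A \<noteq> {}" using KA Kpos unfolding A_def[symmetric] by auto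
  have memA: "m*(j-1) \<le> cnt N \<omega> (\<omega> k) \<and> cnt N \<omega> (\<omega> k) < m*j" if "k \<in> A" for k
    using that mem_pa_I[OF j(1,2) m, of "\<omega> k" \<omega>] j2 unfolding A_def N_def by auto
  have A01: "0 \<le> \<omega> k \<and> \<omega> k \<le> 1" if "k \<in> A" for k
    using that G0 unfolding A_def N_def by auto
  define a where "a = Min (\<omega> ` A)"
  define b where "b = Max (\<omega> ` A)"
  have "a \<in> \<omega> ` A" "b \<in> \<omega> ` A" unfolding a_def b_def using finA \<open>A \<noteq> {}\<close> by auto
  then obtain ka kb where ka: "ka \<in> A" "\<omega> ka = a" and kb: "kb \<in> A" "\<omega> kb = b" by auto
  have ab: "a \<le> \<omega> k \<and> \<omega> k \<le> b" if "k \<in> A" for k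
    unfolding a_def b_def using finA that by auto
  have cnta: "m*(j-1) \<le> cnt N \<omega> a" and cntb: "cnt N \<omega> b < m*j"
    using memA[OF ka(1)] memA[OF kb(1)] ka kb by auto
  have b1: "b \<le> 1" using A01[OF kb(1)] kb by simp
  have "a \<le> b" using ab[OF ka(1)] ka by simp
  
  have da: "\<delta> \<le> a"
  proof (rule ccontr)
    assume "\<not> \<delta> \<le> a"
    then have "cnt N \<omega> a \<le> card {l. l < m*n \<and> \<omega> (2*l) < \<delta> \<and> \<omega> (2*l+1) < \<delta>}"
      unfolding cnt_def N_def by (intro card_mono) (auto simp: pa_right_def)
    then have "real (m*(j-1)) \<le> real (card {l. l < m*n \<and> \<omega> (2*l) < \<delta> \<and> \<omega> (2*l+1) < \<delta>})"
      using cnta by linarith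
    moreover have "real m * (B - 1) \<le> real (m*(j-1))"
    proof -
      have "B - 1 \<le> real (j - 1)" using j j2 by (simp add: of_nat_diff)
      then show ?thesis using m by (simp add: mult_left_mono)
    qed
    ultimately show False using G1 by linarith
  qed
  
  have small: "b - a < (real m + 2) * h"
  proof (rule ccontr)
    assume "\<not> b - a < (real m + 2) * h"
    then have bal: "a + (real m + 2) * h \<le> b" by simp
    define t0 where "t0 = nat \<lceil>a / h\<rceil>"
    have t0: "a / h \<le> real t0" "real t0 < a / h + 1"
      using nat_ceil_bounds[of "a/h"] da pos unfolding t0_def by auto
    have t0h: "a \<le> real t0 * h" "real t0 * h < a + h"
      using t0 pos by (auto simp: field_simps)
    have "\<exists>l<m*n. \<omega> (2*l) \<in> {real (t0+i) * h..<real (t0+i) * h + h} \<and> \<omega> (2*l+1) < real (t0+i) * h" if "i < m" for i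
    proof -
      have "real (t0+i) * h + h \<le> b"
      proof -
        have "real (t0+i) * h + h = real t0 * h + real i * h + h" by (simp add: algebra_simps)
        also have "\<dots> \<le> a + h + real i * h + h" using t0h by simp
        also have "\<dots> \<le> a + (real m + 2) * h"
        proof -
          have "real i \<le> real m" using that by simp
          then have "real i * h \<le> real m * h" using pos by (simp add: mult_right_mono)
          then show ?thesis by (simp add: algebra_simps)
        qed
        finally show ?thesis using bal by simp
      qed
      moreover have "\<delta> \<le> real (t0+i) * h"
      proof -
        have "real t0 * h \<le> real (t0+i) * h" using pos by (simp add: mult_right_mono)
        then show ?thesis using t0h da by linarith
      qed
      ultimately have "\<delta> \<le> real (t0+i) * h \<and> real (t0+i) * h + h \<le> 1" using b1 by linarith
      then show ?thesis using G2 by blast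
    qed
    then obtain f where f: "\<And>i. i < m \<Longrightarrow> f i < m*n \<and> \<omega> (2 * f i) \<in> {real (t0+i) * h..<real (t0+i) * h + h} \<and> \<omega> (2 * f i + 1) < real (t0+i) * h"
      by metis
    have inj: "inj_on f {..<m}"
    proof (rule inj_onI)
      fix i i' assume ii: "i \<in> {..<m}" "i' \<in> {..<m}" "f i = f i'"
      have c1: "real (t0+i) * h \<le> \<omega> (2 * f i)" "\<omega> (2 * f i) < real (t0+i) * h + h" using f[of i] ii(1) by auto
      have c2: "real (t0+i') * h \<le> \<omega> (2 * f i)" "\<omega> (2 * f i) < real (t0+i') * h + h" using f[of i'] ii(2,3) by auto
      have "real (t0+i) * h < real (t0+i') * h + h" "real (t0+i') * h < real (t0+i) * h + h"
        using c1 c2 by linarith+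
      then have "real (t0+i) * h < (real (t0+i') + 1) * h" "real (t0+i') * h < (real (t0+i) + 1) * h"
        by (simp_all add: distrib_right)
      then have "real (t0+i) < real (t0+i') + 1" "real (t0+i') < real (t0+i) + 1"
        using pos(2) by (auto dest: mult_right_less_imp_less)
      then show "i = i'" by linarith
    qed
    have "f ` {..<m} \<subseteq> {l. l < N \<and> a \<le> pa_right \<omega> l \<and> pa_right \<omega> l < b}"
    proof
      fix l assume "l \<in> f ` {..<m}"
      then obtain i where i: "i < m" "l = f i" by auto
      have fi: "f i < m*n" "real (t0+i) * h \<le> \<omega> (2 * f i)" "\<omega> (2 * f i) < real (t0+i) * h + h" "\<omega> (2 * f i + 1) < real (t0+i) * h"
        using f[OF i(1)] by auto
      have r: "pa_right \<omega> l = \<omega> (2 * f i)" using fi i by (simp add: pa_right_def max_def)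
      have mo: "real t0 * h \<le> real (t0+i) * h" using pos by (simp add: mult_right_mono)
      have "real (t0+i) * h + h \<le> b"
      proof -
        have "real (t0+i) * h + h = real t0 * h + real i * h + h" by (simp add: algebra_simps)
        also have "\<dots> \<le> a + h + real i * h + h" using t0h by simp
        also have "\<dots> \<le> a + (real m + 2) * h"
        proof -
          have "real i \<le> real m" using i by simp
          then have "real i * h \<le> real m * h" using pos by (simp add: mult_right_mono)
          then show ?thesis by (simp add: algebra_simps)
        qed
        finally show ?thesis using bal by simp
      qed
      then have "a \<le> pa_right \<omega> l" "pa_right \<omega> l < b" using mo r fi t0h i by linarith+
      then show "l \<in> {l. l < N \<and> a \<le> pa_right \<omega> l \<and> pa_right \<omega> l < b}"
        using fi i by (auto simp: N_def)
    qed
    then have "m \<le> card {l. l < N \<and> a \<le> pa_right \<omega> l \<and> pa_right \<omega> l < b}"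
      using card_inj_on_le[OF inj] by auto
    moreover have "cnt N \<omega> b = cnt N \<omega> a + card {l. l < N \<and> a \<le> pa_right \<omega> l \<and> pa_right \<omega> l < b}"
      by (rule cnt_diff[OF \<open>a \<le> b\<close>])
    moreover have "m*j = m*(j-1) + m" using j by (cases j) auto
    ultimately show False using cnta cntb by linarith
  qed
  
  define C where "C = (\<lambda>t::nat. {k. k < 2*N \<and> \<omega> k \<in> {real t * h3..<real t * h3 + h3}})"
  define s0 where "s0 = nat \<lfloor>a / h3\<rfloor>"
  define s1 where "s1 = nat \<lfloor>b / h3\<rfloor>"
  have a0: "0 \<le> a" using da pos by simp
  have "A \<subseteq> (\<Union>t\<in>{s0..s1}. C t)"
  proof
    fix k assume k: "k \<in> A"
    define t where "t = nat \<lfloor>\<omega> k / h3\<rfloor>"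
    have wk: "0 \<le> \<omega> k" using ab[OF k] a0 by simp
    have tb: "real t \<le> \<omega> k / h3" "\<omega> k / h3 < real t + 1"
      using nat_floor_bounds[of "\<omega> k / h3"] wk pos unfolding t_def by auto
    have "real t * h3 \<le> \<omega> k" "\<omega> k < real t * h3 + h3"
      using tb pos by (auto simp: field_simps)
    moreover have "s0 \<le> t" "t \<le> s1"
      unfolding s0_def s1_def t_def using ab[OF k] pos
      by (auto intro!: nat_mono floor_mono divide_right_mono)
    moreover have "k < 2*N" using k unfolding A_def by auto
    ultimately show "k \<in> (\<Union>t\<in>{s0..s1}. C t)" unfolding C_def by auto
  qed
  then have "card A \<le> card (\<Union>t\<in>{s0..s1}. C t)"
    by (intro card_mono) (auto simp: C_def)
  also have "\<dots> \<le> (\<Sum>t\<in>{s0..s1}. card (C t))" by (rule card_UN_le) simp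
  also have "\<dots> \<le> (\<Sum>t\<in>{s0..s1}. 5)"
  proof (rule sum_mono)
    fix t assume t: "t \<in> {s0..s1}"
    have "real s1 \<le> b / h3" using nat_floor_bounds[of "b / h3"] a0 \<open>a \<le> b\<close> pos unfolding s1_def by auto
    also have "\<dots> \<le> 1 / h3" using b1 pos by (simp add: divide_right_mono)
    finally have "t \<le> T" using t pos(4) by auto
    then show "card (C t) \<le> 5" using G3 unfolding C_def N_def by fastforce
  qed
  also have "\<dots> = 5 * (s1 + 1 - s0)" by simp
  finally have cA: "real (card A) \<le> 5 * real (s1 + 1 - s0)" by linarith
  have "real (s1 + 1 - s0) \<le> (b - a) / h3 + 2"
  proof -
    have "real s1 \<le> b / h3" using nat_floor_bounds[of "b / h3"] a0 \<open>a \<le> b\<close> pos unfolding s1_def by auto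
    moreover have "a / h3 < real s0 + 1" using nat_floor_bounds[of "a / h3"] a0 pos unfolding s0_def by auto
    ultimately have "real s1 + 1 - real s0 \<le> (b - a) / h3 + 2" by (simp add: diff_divide_distrib)
    moreover have "s0 \<le> s1" unfolding s0_def s1_def using \<open>a \<le> b\<close> pos
      by (auto intro!: nat_mono floor_mono divide_right_mono)
    ultimately show ?thesis by (simp add: of_nat_diff)
  qed
  also have "\<dots> \<le> (real m + 2) * h / h3 + 2"
    using small pos by (simp add: divide_right_mono)
  finally have "5 * real (s1 + 1 - s0) \<le> 5 * ((real m + 2) * h / h3 + 2)" by simp
  then have "real (card A) \<le> 5 * ((real m + 2) * h / h3 + 2)" using cA by linarith
  then show False using KA Kb unfolding A_def by linarith
qed

lemma comp_meas_all[measurable]: "(\<lambda>\<omega>. \<omega> k) \<in> borel_measurable (PiM I (\<lambda>_. U))"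
proof (cases "k \<in> I")
  case True then show ?thesis by (rule comp_meas)
next
  case False
  have c: "(\<lambda>\<omega>. undefined :: real) \<in> borel_measurable (PiM I (\<lambda>_. U))" by (rule measurable_const) simp
  have e: "\<And>\<omega>. \<omega> \<in> space (PiM I (\<lambda>_. U)) \<Longrightarrow> \<omega> k = undefined"
    using False by (auto simp: space_PiM PiE_def extensional_def)
  have "(\<lambda>\<omega>. \<omega> k) \<in> borel_measurable (PiM I (\<lambda>_. U)) \<longleftrightarrow> (\<lambda>\<omega>. undefined :: real) \<in> borel_measurable (PiM I (\<lambda>_. U))"
    by (rule measurable_cong) (rule e)
  then show ?thesis using c by blast
qed

lemma cnt_real: "real (cnt N \<omega> x) = (\<Sum>l<N. if max (\<omega> (2*l)) (\<omega> (2*l+1)) < x then 1 else 0)"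
  unfolding cnt_def pa_right_def by (rule card_as_sum)

lemma deg_real:
  assumes "1 \<le> j" "j \<le> n" "1 \<le> m"
  shows "real (pa_degree m n \<omega> j) = (\<Sum>k<2*(m*n). if ((if j = 1 then 0 < \<omega> k else real (m*(j-1)) \<le> real (cnt (m*n) \<omega> (\<omega> k))) \<and> real (cnt (m*n) \<omega> (\<omega> k)) < real (m*j)) then 1 else 0)"
  unfolding pa_degree_eq card_as_sum
  by (rule sum.cong) (simp_all only: mem_pa_I[OF assms] of_nat_le_iff of_nat_less_iff)

lemma deg_meas:
  assumes "1 \<le> j" "j \<le> n" "1 \<le> m"
  shows "(\<lambda>\<omega>. real (pa_degree m n \<omega> j)) \<in> borel_measurable (PiM I (\<lambda>_. U))"
proof -
  let ?M = "PiM I (\<lambda>_. U)"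
  have ind: "(\<lambda>x. if P x then (1::real) else 0) \<in> borel_measurable ?M" if "{x\<in>space ?M. P x} \<in> sets ?M" for P
    by (rule measurable_If[OF measurable_const measurable_const that]) simp_all
  have cm: "(\<lambda>\<omega>. real (cnt (m*n) \<omega> (\<omega> k))) \<in> borel_measurable ?M" for k
    unfolding cnt_real
    apply (rule borel_measurable_sum)
    apply (rule ind)
    apply (rule borel_measurable_less)
    apply (rule borel_measurable_max)
    apply (rule comp_meas_all)+
    done
  have le: "{\<omega>\<in>space ?M. c \<le> real (cnt (m*n) \<omega> (\<omega> k))} \<in> sets ?M" for k c
    by (rule borel_measurable_le[OF measurable_const cm]) simp
  have less: "{\<omega>\<in>space ?M. real (cnt (m*n) \<omega> (\<omega> k)) < c} \<in> sets ?M" for k c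
    by (rule borel_measurable_less[OF cm measurable_const]) simp
  have pos: "{\<omega>\<in>space ?M. 0 < \<omega> k} \<in> sets ?M" for k
    by (rule borel_measurable_less[OF measurable_const comp_meas_all]) simp
  show ?thesis
    unfolding deg_real[OF assms]
    apply (rule borel_measurable_sum)
    apply (rule ind)
    apply (cases "j = 1")
     apply (simp only: if_True if_False simp_thms)
     apply (intro sets.sets_Collect_conj pos less)
    apply (subst if_not_P, assumption)
    apply (intro sets.sets_Collect_conj le less)
    done
qed

lemma pred_coord: "A \<in> sets borel \<Longrightarrow> {\<omega>\<in>space (PiM I (\<lambda>_. U)). \<omega> k \<in> A} \<in> sets (PiM I (\<lambda>_. U))"
proof -
  assume A: "A \<in> sets borel"
  have "{\<omega>\<in>space (PiM I (\<lambda>_. U)). \<omega> k \<in> A} = (\<lambda>\<omega>. \<omega> k) -` A \<inter> space (PiM I (\<lambda>_. U))" by auto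
  also have "\<dots> \<in> sets (PiM I (\<lambda>_. U))" by (rule measurable_sets[OF comp_meas_all A])
  finally show ?thesis .
qed

lemma ind_meas: "{x\<in>space M. P x} \<in> sets M \<Longrightarrow> (\<lambda>x. if P x then (1::real) else 0) \<in> borel_measurable M"
  by (rule measurable_If[OF measurable_const measurable_const]) simp_all

lemma card_pred_meas:
  fixes d :: nat
  assumes "\<And>k. k < d \<Longrightarrow> {x\<in>space M. P k x} \<in> sets M"
  shows "(\<lambda>x. real (card {k. k < d \<and> P k x})) \<in> borel_measurable M"
  unfolding card_as_sum
  by (rule borel_measurable_sum) (rule ind_meas, use assms in simp)

lemma exp_bound: "0 \<le> x \<Longrightarrow> x \<le> 1 \<Longrightarrow> (1 - x) ^ N \<le> exp (- (x * real N))"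
proof -
  assume x: "0 \<le> x" "x \<le> 1"
  have "(1 - x) ^ N \<le> exp (- x) ^ N"
    by (rule power_mono) (use x exp_ge_add_one_self[of "-x"] in auto)
  also have "\<dots> = exp (- (x * real N))" by (simp add: exp_of_nat_mult[symmetric] algebra_simps)
  finally show ?thesis .
qed

lemma main_bound:
  fixes m n :: nat and \<delta> h h3 K B :: real
  assumes m: "1 \<le> m" and n: "1 \<le> n" and d: "0 < \<delta>" "\<delta> \<le> 1" and h: "0 < h" "h \<le> 1" and h3: "0 < h3"
    and B: "2 \<le> B" and Kb: "5 * ((real m + 2) * h / h3 + 2) < K"
  shows "1 - (real (m*n) * \<delta>^2 / (real m * (B - 1)) + (1/h + 1) * exp (- (h * \<delta> * real n))
              + (1/h3 + 2) * (real (2*(m*n)) * h3) ^ 6)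
     \<le> measure (PiM {..<2*(m*n)} (\<lambda>_. U)) {\<omega> \<in> space (PiM {..<2*(m*n)} (\<lambda>_. U)).
           \<forall>j\<in>{1..n}. K \<le> real (pa_degree m n \<omega> j) \<longrightarrow> real j \<le> B}"
proof -
  define N where "N = m*n"
  have N1: "1 \<le> N" using m n by (simp add: N_def)
  have "n \<le> N" unfolding N_def using m by simp
  then have Nn: "real n \<le> real N" by simp
  let ?M = "PiM {..<2*N} (\<lambda>_. U)"
  interpret P: prob_space ?M by (rule prob_space_PiU)
  define E where "E = {\<omega> \<in> space ?M. \<forall>j\<in>{1..n}. K \<le> real (pa_degree m n \<omega> j) \<longrightarrow> real j \<le> B}"
  define B0 where "B0 = {\<omega> \<in> space ?M. \<exists>k<2*N. \<omega> k \<notin> {0..1}}"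
  define B1 where "B1 = {\<omega> \<in> space ?M. real m * (B - 1) \<le> real (card {l. l < N \<and> \<omega> (2*l) < \<delta> \<and> \<omega> (2*l+1) < \<delta>})}"
  define S2 where "S2 = {t::nat. t \<le> nat \<lfloor>1/h\<rfloor> \<and> \<delta> \<le> real t * h \<and> real t * h + h \<le> 1}"
  define NP where "NP = (\<lambda>t::nat. {\<omega> \<in> space ?M. \<forall>l<N. \<not> (\<omega> (2*l) \<in> {real t * h..<real t * h + h} \<and> \<omega> (2*l+1) < real t * h)})"
  define T where "T = nat \<lceil>1/h3\<rceil>"
  define MI where "MI = (\<lambda>t::nat. {\<omega> \<in> space ?M. 6 \<le> card {k \<in> {..<2*N}. \<omega> k \<in> {real t * h3..<real t * h3 + h3}}})"
  define B2 where "B2 = (\<Union>t\<in>S2. NP t)"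
  define B3 where "B3 = (\<Union>t\<in>{..T}. MI t)"
  have finS2: "finite S2" unfolding S2_def by auto
  
  have E_m: "E \<in> P.events"
  proof -
    have "{\<omega> \<in> space ?M. \<forall>j. j \<in> {1..n} \<longrightarrow> (K \<le> real (pa_degree m n \<omega> j) \<longrightarrow> real j \<le> B)} \<in> P.events"
    proof (rule sets.sets_Collect_countable_All)
      fix j :: nat
      show "{\<omega> \<in> space ?M. j \<in> {1..n} \<longrightarrow> (K \<le> real (pa_degree m n \<omega> j) \<longrightarrow> real j \<le> B)} \<in> P.events"
      proof (cases "j \<in> {1..n}")
        case True
        have dm: "(\<lambda>\<omega>. real (pa_degree m n \<omega> j)) \<in> borel_measurable ?M"
          by (rule deg_meas) (use True m in auto)
        have a: "{\<omega> \<in> space ?M. K \<le> real (pa_degree m n \<omega> j)} \<in> P.events"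
          by (rule borel_measurable_le[OF measurable_const dm]) simp
        have b: "{\<omega> \<in> space ?M. K \<le> real (pa_degree m n \<omega> j) \<longrightarrow> real j \<le> B} \<in> P.events"
          by (rule sets.sets_Collect_imp[OF sets.sets_Collect_const a])
        have c: "{\<omega> \<in> space ?M. j \<in> {1..n} \<longrightarrow> (K \<le> real (pa_degree m n \<omega> j) \<longrightarrow> real j \<le> B)} = {\<omega> \<in> space ?M. K \<le> real (pa_degree m n \<omega> j) \<longrightarrow> real j \<le> B}"
          by (rule Collect_cong) (simp only: True simp_thms)
        show ?thesis unfolding c by (rule b)
      next
        case False
        then have c: "{\<omega> \<in> space ?M. j \<in> {1..n} \<longrightarrow> (K \<le> real (pa_degree m n \<omega> j) \<longrightarrow> real j \<le> B)} = space ?M"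
          using False by (simp only: simp_thms Collect_mem_eq)
        show ?thesis unfolding c by (rule sets.top)
      qed
    qed
    moreover have "E = {\<omega> \<in> space ?M. \<forall>j. j \<in> {1..n} \<longrightarrow> (K \<le> real (pa_degree m n \<omega> j) \<longrightarrow> real j \<le> B)}"
      unfolding E_def Ball_def by (rule refl)
    ultimately show ?thesis by (simp only:)
  qed
  have B0_m: "B0 \<in> P.events"
  proof -
    have "{\<omega> \<in> space ?M. \<exists>k. k < 2*N \<and> \<omega> k \<notin> {0..1}} \<in> P.events"
    proof (rule sets.sets_Collect_countable_Ex)
      fix k :: nat
      have a: "{\<omega> \<in> space ?M. \<omega> k \<in> {0..1}} \<in> P.events" by (rule pred_coord) simp
      have b: "{\<omega> \<in> space ?M. \<omega> k \<notin> {0..1}} \<in> P.events" by (rule sets.sets_Collect_neg[OF a])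
      show "{\<omega> \<in> space ?M. k < 2*N \<and> \<omega> k \<notin> {0..1}} \<in> P.events"
        by (rule sets.sets_Collect_conj[OF b sets.sets_Collect_const])
    qed
    moreover have "B0 = {\<omega> \<in> space ?M. \<exists>k. k < 2*N \<and> \<omega> k \<notin> {0..1}}" unfolding B0_def by blast
    ultimately show ?thesis by simp
  qed
  have B1_m: "B1 \<in> P.events"
  proof -
    have cm: "(\<lambda>\<omega>. real (card {l. l < N \<and> \<omega> (2*l) < \<delta> \<and> \<omega> (2*l+1) < \<delta>})) \<in> borel_measurable ?M"
    proof (rule card_pred_meas)
      fix l
      have a0: "{\<omega> \<in> space ?M. \<omega> (2*l) \<in> {..<\<delta>}} \<in> P.events" by (rule pred_coord) simp
      have b0: "{\<omega> \<in> space ?M. \<omega> (2*l+1) \<in> {..<\<delta>}} \<in> P.events" by (rule pred_coord) simp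
      have a: "{\<omega> \<in> space ?M. \<omega> (2*l) < \<delta>} \<in> P.events" using a0 by (simp only: lessThan_iff)
      have b: "{\<omega> \<in> space ?M. \<omega> (2*l+1) < \<delta>} \<in> P.events" using b0 by (simp only: lessThan_iff)
      show "{\<omega> \<in> space ?M. \<omega> (2*l) < \<delta> \<and> \<omega> (2*l+1) < \<delta>} \<in> P.events"
        by (rule sets.sets_Collect_conj[OF b a])
    qed
    show ?thesis unfolding B1_def by (rule borel_measurable_le[OF measurable_const cm]) simp
  qed
  have NP_m: "NP t \<in> P.events" for t
  proof -
    have "{\<omega> \<in> space ?M. \<forall>l. l < N \<longrightarrow> \<not> (\<omega> (2*l) \<in> {real t * h..<real t * h + h} \<and> \<omega> (2*l+1) < real t * h)} \<in> P.events"
    proof (rule sets.sets_Collect_countable_All)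
      fix l :: nat
      have a: "{\<omega> \<in> space ?M. \<omega> (2*l) \<in> {real t * h..<real t * h + h}} \<in> P.events"
        by (rule pred_coord) simp
      have b0: "{\<omega> \<in> space ?M. \<omega> (2*l+1) \<in> {..<real t * h}} \<in> P.events"
        by (rule pred_coord) simp
      have b: "{\<omega> \<in> space ?M. \<omega> (2*l+1) < real t * h} \<in> P.events"
        using b0 by (simp only: lessThan_iff)
      have c: "{\<omega> \<in> space ?M. \<omega> (2*l) \<in> {real t * h..<real t * h + h} \<and> \<omega> (2*l+1) < real t * h} \<in> P.events"
        by (rule sets.sets_Collect_conj[OF b a])
      have d: "{\<omega> \<in> space ?M. \<not> (\<omega> (2*l) \<in> {real t * h..<real t * h + h} \<and> \<omega> (2*l+1) < real t * h)} \<in> P.events"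
        by (rule sets.sets_Collect_neg[OF c])
      show "{\<omega> \<in> space ?M. l < N \<longrightarrow> \<not> (\<omega> (2*l) \<in> {real t * h..<real t * h + h} \<and> \<omega> (2*l+1) < real t * h)} \<in> P.events"
        by (rule sets.sets_Collect_imp[OF d sets.sets_Collect_const])
    qed
    then show ?thesis unfolding NP_def by simp
  qed
  have MI_m: "MI t \<in> P.events" for t
  proof -
    have "{\<omega> \<in> space ?M. real 6 \<le> real (card {k. k < 2*N \<and> \<omega> k \<in> {real t * h3..<real t * h3 + h3}})} \<in> P.events"
    proof (rule borel_measurable_le[OF measurable_const card_pred_meas])
      fix k
      show "{\<omega> \<in> space ?M. \<omega> k \<in> {real t * h3..<real t * h3 + h3}} \<in> P.events" by (rule pred_coord) simp
    qed simp
    moreover have "MI t = {\<omega> \<in> space ?M. real 6 \<le> real (card {k. k < 2*N \<and> \<omega> k \<in> {real t * h3..<real t * h3 + h3}})}"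
      unfolding MI_def by (simp only: of_nat_le_iff lessThan_iff)
    ultimately show ?thesis by simp
  qed
  have B2_m: "B2 \<in> P.events" unfolding B2_def using finS2 NP_m by auto
  have B3_m: "B3 \<in> P.events" unfolding B3_def using MI_m by auto
  
  have incl: "space ?M - (B0 \<union> B1 \<union> B2 \<union> B3) \<subseteq> E"
  proof
    fix \<omega> assume w: "\<omega> \<in> space ?M - (B0 \<union> B1 \<union> B2 \<union> B3)"
    then have ws: "\<omega> \<in> space ?M" by simp
    have G0: "\<forall>k<2*(m*n). 0 \<le> \<omega> k \<and> \<omega> k \<le> 1" using w unfolding B0_def N_def by auto
    have G1: "real (card {l. l < m*n \<and> \<omega> (2*l) < \<delta> \<and> \<omega> (2*l+1) < \<delta>}) < real m * (B - 1)"
      using w unfolding B1_def N_def by auto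
    have G2: "\<forall>t::nat. \<delta> \<le> real t * h \<and> real t * h + h \<le> 1 \<longrightarrow>
              (\<exists>l<m*n. \<omega> (2*l) \<in> {real t * h..<real t * h + h} \<and> \<omega> (2*l+1) < real t * h)"
    proof (intro allI impI)
      fix t :: nat assume t: "\<delta> \<le> real t * h \<and> real t * h + h \<le> 1"
      have "real t * h \<le> 1" using t h by linarith
      then have "real t \<le> 1/h" using h by (simp add: field_simps)
      then have "t \<le> nat \<lfloor>1/h\<rfloor>" by (simp add: le_nat_floor)
      then have "t \<in> S2" using t unfolding S2_def by auto
      then have "\<omega> \<notin> NP t" using w unfolding B2_def by auto
      then show "\<exists>l<m*n. \<omega> (2*l) \<in> {real t * h..<real t * h + h} \<and> \<omega> (2*l+1) < real t * h"
        using ws unfolding NP_def N_def by auto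
    qed
    have G3: "\<forall>t::nat. t \<le> T \<longrightarrow> card {k. k < 2*(m*n) \<and> \<omega> k \<in> {real t * h3..<real t * h3 + h3}} < 6"
    proof (intro allI impI)
      fix t assume "t \<le> T"
      then have "\<omega> \<notin> MI t" using w unfolding B3_def by auto
      moreover have "{k \<in> {..<2*N}. \<omega> k \<in> {real t * h3..<real t * h3 + h3}} = {k. k < 2*(m*n) \<and> \<omega> k \<in> {real t * h3..<real t * h3 + h3}}"
        unfolding N_def by auto
      ultimately show "card {k. k < 2*(m*n) \<and> \<omega> k \<in> {real t * h3..<real t * h3 + h3}} < 6"
        using ws unfolding MI_def by auto
    qed
    have T: "1 / h3 \<le> real T" using nat_ceil_bounds[of "1/h3"] h3 unfolding T_def by auto
    have "K \<le> real (pa_degree m n \<omega> j) \<longrightarrow> real j \<le> B" if j: "j \<in> {1..n}" for j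
    proof (rule impI, rule ccontr)
      assume K: "K \<le> real (pa_degree m n \<omega> j)" and "\<not> real j \<le> B"
      then have "B < real j" by simp
      have "real (pa_degree m n \<omega> j) < K"
        by (rule deterministic[OF m G0 G1 G2 G3 d(1) h(1) h3 T _ Kb]) (use B j \<open>B < real j\<close> in auto)
      then show False using K by simp
    qed
    then show "\<omega> \<in> E" unfolding E_def using ws by auto
  qed
  
  have p0: "P.prob B0 = 0" unfolding B0_def by (rule prob_outside)
  have p1: "P.prob B1 \<le> real (m*n) * \<delta>^2 / (real m * (B - 1))"
    unfolding B1_def N_def
    by (rule prob_few_small) (use d m B in auto)
  have p2: "P.prob B2 \<le> (1/h + 1) * exp (- (h * \<delta> * real n))"
  proof -
    have "P.prob B2 \<le> (\<Sum>t\<in>S2. P.prob (NP t))"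
      unfolding B2_def by (rule P.finite_measure_subadditive_finite) (use finS2 NP_m in auto)
    also have "\<dots> \<le> (\<Sum>t\<in>S2. exp (- (h * \<delta> * real n)))"
    proof (rule sum_mono)
      fix t assume t: "t \<in> S2"
      have th: "\<delta> \<le> real t * h" "real t * h + h \<le> 1" using t unfolding S2_def by auto
      have "P.prob (NP t) = (1 - h * (real t * h)) ^ N"
        unfolding NP_def by (rule prob_no_pair) (use N1 th h d in auto)
      also have "\<dots> \<le> exp (- (h * (real t * h) * real N))"
      proof (rule exp_bound)
        show "0 \<le> h * (real t * h)" using h by simp
        have "real t * h \<le> 1" using th h by linarith
        then show "h * (real t * h) \<le> 1" using h by (metis mult_le_one less_imp_le th(1) d(1) order_trans)
      qed
      also have "\<dots> \<le> exp (- (h * \<delta> * real n))"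
      proof -
        have "h * \<delta> \<le> h * (real t * h)" using th h by (simp add: mult_left_mono)
        moreover have "0 \<le> h * \<delta>" using h d by simp
        ultimately have "h * \<delta> * real n \<le> h * (real t * h) * real N"
          using Nn by (meson mult_mono of_nat_0_le_iff order_trans)
        then show ?thesis by simp
      qed
      finally show "P.prob (NP t) \<le> exp (- (h * \<delta> * real n))" .
    qed
    also have "\<dots> = real (card S2) * exp (- (h * \<delta> * real n))" by simp
    also have "\<dots> \<le> (1/h + 1) * exp (- (h * \<delta> * real n))"
    proof (rule mult_right_mono)
      have "S2 \<subseteq> {..nat \<lfloor>1/h\<rfloor>}" unfolding S2_def by auto
      then have "card S2 \<le> nat \<lfloor>1/h\<rfloor> + 1" using card_mono[of "{..nat \<lfloor>1/h\<rfloor>}" S2] by simp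
      then have "real (card S2) \<le> real (nat \<lfloor>1/h\<rfloor>) + 1" by linarith
      also have "\<dots> \<le> 1/h + 1" using nat_floor_bounds[of "1/h"] h by auto
      finally show "real (card S2) \<le> 1/h + 1" .
    qed simp
    finally show ?thesis .
  qed
  have p3: "P.prob B3 \<le> (1/h3 + 2) * (real (2*(m*n)) * h3) ^ 6"
  proof -
    have "P.prob B3 \<le> (\<Sum>t\<in>{..T}. P.prob (MI t))"
      unfolding B3_def by (rule P.finite_measure_subadditive_finite) (use MI_m in auto)
    also have "\<dots> \<le> (\<Sum>t\<in>{..T}. (real (2*N) * h3) ^ 6)"
    proof (rule sum_mono)
      fix t assume "t \<in> {..T}"
      have "P.prob (MI t) \<le> (real (2*N) * (real t * h3 + h3 - real t * h3)) ^ 6"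
        unfolding MI_def by (rule prob_many_in) (use h3 in auto)
      then show "P.prob (MI t) \<le> (real (2*N) * h3) ^ 6" by simp
    qed
    also have "\<dots> = (real T + 1) * (real (2*N) * h3) ^ 6" by simp
    also have "\<dots> \<le> (1/h3 + 2) * (real (2*N) * h3) ^ 6"
    proof (rule mult_right_mono)
      show "real T + 1 \<le> 1/h3 + 2" using nat_ceil_bounds[of "1/h3"] h3 unfolding T_def by auto
    qed simp
    finally show ?thesis unfolding N_def .
  qed
  have "P.prob (B0 \<union> B1 \<union> B2 \<union> B3) \<le> P.prob B0 + P.prob B1 + P.prob B2 + P.prob B3"
  proof -
    have "P.prob (B0 \<union> B1 \<union> B2 \<union> B3) \<le> P.prob (B0 \<union> B1 \<union> B2) + P.prob B3"
      by (rule measure_Un_le) (use B0_m B1_m B2_m B3_m in auto)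
    moreover have "P.prob (B0 \<union> B1 \<union> B2) \<le> P.prob (B0 \<union> B1) + P.prob B2"
      by (rule measure_Un_le) (use B0_m B1_m B2_m in auto)
    moreover have "P.prob (B0 \<union> B1) \<le> P.prob B0 + P.prob B1"
      by (rule measure_Un_le) (use B0_m B1_m in auto)
    ultimately show ?thesis by linarith
  qed
  moreover have "P.prob (space ?M - (B0 \<union> B1 \<union> B2 \<union> B3)) = 1 - P.prob (B0 \<union> B1 \<union> B2 \<union> B3)"
    by (rule P.prob_compl) (use B0_m B1_m B2_m B3_m in auto)
  moreover have "P.prob (space ?M - (B0 \<union> B1 \<union> B2 \<union> B3)) \<le> P.prob E"
    by (rule P.finite_measure_mono[OF incl E_m])
  ultimately have "1 - (P.prob B0 + P.prob B1 + P.prob B2 + P.prob B3) \<le> P.prob E" by linarith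
  then show ?thesis using p0 p1 p2 p3 unfolding E_def N_def by linarith
qed

lemma final_from_limits:
  fixes m :: nat
  assumes m1: "m \<ge> 1"
  assumes lim1: "(\<lambda>n. real n * (1 / ln (real n) powr (1/39))^2 / (real n / ln (real n) powr (1/39) - 1)) \<longlonglongrightarrow> 0"
  and lim2: "(\<lambda>n. (1 / real n powr (-3/4) + 1) * exp (- (real n powr (-3/4) * (1 / ln (real n) powr (1/39)) * real n))) \<longlonglongrightarrow> 0"
  and lim3: "(\<lambda>n. (1 / (real n powr (-5/4) * ln (real n)) + 2) * (real n * (real n powr (-5/4) * ln (real n))) ^ 6) \<longlonglongrightarrow> 0"
  and lim4: "(\<lambda>n. (real n powr (-3/4) / (real n powr (-5/4) * ln (real n))) / (sqrt (real n) / ln (real n) powr (1/20))) \<longlonglongrightarrow> 0"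
  and limK: "filterlim (\<lambda>n. sqrt (real n) / ln (real n) powr (1/20)) at_top sequentially"
  and limB: "filterlim (\<lambda>n. real n / ln (real n) powr (1/39)) at_top sequentially"
  and evln: "eventually (\<lambda>n. 1 \<le> ln (real n)) sequentially"
  shows "(\<lambda>n. measure (pa_space m n)
            {\<omega> \<in> space (pa_space m n).
               \<forall>j\<in>{1..n}. real (pa_degree m n \<omega> j) \<ge> sqrt (real n) / (ln (real n)) powr (1/20)
                 \<longrightarrow> real j \<le> real n / (ln (real n)) powr (1/39)})
         \<longlonglongrightarrow> 1"
proof -
  define Lf where "Lf = (\<lambda>n::nat. ln (real n) powr (1/39))"
  define Kf where "Kf = (\<lambda>n::nat. sqrt (real n) / ln (real n) powr (1/20))"
  define Bf where "Bf = (\<lambda>n::nat. real n / ln (real n) powr (1/39))"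
  define hf where "hf = (\<lambda>n::nat. real n powr (-3/4))"
  define h3f where "h3f = (\<lambda>n::nat. real n powr (-5/4) * ln (real n))"
  define f where "f = (\<lambda>n. measure (pa_space m n)
            {\<omega> \<in> space (pa_space m n).
               \<forall>j\<in>{1..n}. real (pa_degree m n \<omega> j) \<ge> sqrt (real n) / (ln (real n)) powr (1/20)
                 \<longrightarrow> real j \<le> real n / (ln (real n)) powr (1/39)})"
  define g where "g = (\<lambda>n. 1 - (real n * (1 / Lf n)^2 / (Bf n - 1) + (1 / hf n + 1) * exp (- (hf n * (1 / Lf n) * real n))
              + (2 * real m) ^ 6 * ((1 / h3f n + 2) * (real n * h3f n) ^ 6)))"
  have g_lim: "g \<longlonglongrightarrow> 1"
  proof -
    have "(\<lambda>n. real n * (1 / Lf n)^2 / (Bf n - 1) + (1 / hf n + 1) * exp (- (hf n * (1 / Lf n) * real n))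
              + (2 * real m) ^ 6 * ((1 / h3f n + 2) * (real n * h3f n) ^ 6)) \<longlonglongrightarrow> 0 + 0 + (2 * real m)^6 * 0"
      unfolding Lf_def Bf_def hf_def h3f_def
      by (intro tendsto_add tendsto_mult tendsto_const lim1 lim2 lim3)
    then have "(\<lambda>n. 1 - (real n * (1 / Lf n)^2 / (Bf n - 1) + (1 / hf n + 1) * exp (- (hf n * (1 / Lf n) * real n))
              + (2 * real m) ^ 6 * ((1 / h3f n + 2) * (real n * h3f n) ^ 6))) \<longlonglongrightarrow> 1 - 0"
      by (intro tendsto_diff tendsto_const) simp
    then show ?thesis unfolding g_def by simp
  qed
  have ev: "eventually (\<lambda>n. g n \<le> f n) sequentially"
  proof -
    have e1: "eventually (\<lambda>n. 2 \<le> Bf n) sequentially"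
      using limB unfolding Bf_def filterlim_at_top by blast
    have e2: "eventually (\<lambda>n. 20 \<le> Kf n) sequentially"
      using limK unfolding Kf_def filterlim_at_top by blast
    have e3: "eventually (\<lambda>n. (hf n / h3f n) / Kf n < 1 / (20 * (real m + 2))) sequentially"
      using lim4 unfolding hf_def h3f_def Kf_def
      by (rule order_tendstoD) (use m1 in simp)
    have e4: "eventually (\<lambda>n. 1 \<le> n) sequentially" by (rule eventually_ge_at_top)
    show ?thesis
      using e1 e2 e3 e4 evln
    proof eventually_elim
      case (elim n)
      have ln1: "1 \<le> ln (real n)" using elim by simp
      have n1: "1 \<le> real n" using elim by simp
      have L1: "1 \<le> Lf n" unfolding Lf_def using ln1 by (simp add: ge_one_powr_ge_zero)
      have Kpos: "0 < Kf n" using elim by simp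
      have hpos: "0 < hf n" unfolding hf_def using n1 by simp
      have h1: "hf n \<le> 1" unfolding hf_def
        using powr_mono[of "-(3/4)" 0 "real n"] n1 by simp
      have "0 < real n powr (-5/4)" using n1 by simp
      have "0 < ln (real n)" using ln1 by linarith
      with \<open>0 < real n powr (-5/4)\<close> have h3pos: "0 < h3f n" unfolding h3f_def by (rule mult_pos_pos)
      have d: "0 < 1 / Lf n" "1 / Lf n \<le> 1" using L1 by auto
      have Kb: "5 * ((real m + 2) * hf n / h3f n + 2) < Kf n"
      proof -
        have r: "hf n / h3f n < 1 / (20 * (real m + 2)) * Kf n"
          using iffD1[OF pos_divide_less_eq[OF Kpos] elim(3)] .
        have mp: "0 < real m + 2" by simp
        have "(real m + 2) * (hf n / h3f n) < (real m + 2) * (1 / (20 * (real m + 2)) * Kf n)"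
          by (rule mult_strict_left_mono[OF r mp])
        also have "\<dots> = Kf n / 20" using mp by (simp add: field_simps)
        finally have "(real m + 2) * (hf n / h3f n) < Kf n / 20" .
        then have "(real m + 2) * hf n / h3f n < Kf n / 20" by (simp add: times_divide_eq_right)
        moreover have "20 \<le> Kf n" using elim(2) by simp
        moreover have "\<And>x K::real. x < K / 20 \<Longrightarrow> 20 \<le> K \<Longrightarrow> 5 * (x + 2) < K" by (simp add: field_simps)
        ultimately show ?thesis by blast
      qed
      have mb: "1 - (real (m*n) * (1 / Lf n)^2 / (real m * (Bf n - 1)) + (1/hf n + 1) * exp (- (hf n * (1 / Lf n) * real n))
              + (1/h3f n + 2) * (real (2*(m*n)) * h3f n) ^ 6)
          \<le> measure (PiM {..<2*(m*n)} (\<lambda>_. U)) {\<omega> \<in> space (PiM {..<2*(m*n)} (\<lambda>_. U)).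
           \<forall>j\<in>{1..n}. Kf n \<le> real (pa_degree m n \<omega> j) \<longrightarrow> real j \<le> Bf n}"
        by (rule main_bound[OF m1 elim(4) d hpos h1 h3pos elim(1) Kb])
      have t1: "real (m*n) * (1 / Lf n)^2 / (real m * (Bf n - 1)) = real n * (1 / Lf n)^2 / (Bf n - 1)"
        using m1 by simp
      have t3: "(1/h3f n + 2) * (real (2*(m*n)) * h3f n) ^ 6 = (2 * real m) ^ 6 * ((1 / h3f n + 2) * (real n * h3f n) ^ 6)"
        by (simp add: power_mult_distrib algebra_simps)
      have fe: "f n = measure (PiM {..<2*(m*n)} (\<lambda>_. U)) {\<omega> \<in> space (PiM {..<2*(m*n)} (\<lambda>_. U)).
           \<forall>j\<in>{1..n}. Kf n \<le> real (pa_degree m n \<omega> j) \<longrightarrow> real j \<le> Bf n}"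
        unfolding f_def pa_space_U Kf_def Bf_def by (simp add: mult.assoc)
      show ?case using mb m1 unfolding t1 t3 fe g_def Lf_def by simp
    qed
  qed
  have le1: "eventually (\<lambda>n. f n \<le> 1) sequentially"
  proof (rule always_eventually, rule allI)
    fix n
    interpret P: prob_space "pa_space m n" unfolding pa_space_U by (rule prob_space_PiU)
    show "f n \<le> 1" unfolding f_def by (rule P.prob_le_1)
  qed
  have "f \<longlonglongrightarrow> 1" by (rule tendsto_sandwich[OF ev le1 g_lim tendsto_const])
  then show ?thesis unfolding f_def .
qed


lemma lim1: "(\<lambda>n. real n * (1 / ln (real n) powr (1/39))^2 / (real n / ln (real n) powr (1/39) - 1)) \<longlonglongrightarrow> 0"
  by real_asymp
lemma lim2: "(\<lambda>n. (1 / real n powr (-3/4) + 1) * exp (- (real n powr (-3/4) * (1 / ln (real n) powr (1/39)) * real n))) \<longlonglongrightarrow> 0"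
  by real_asymp
lemma lim3: "(\<lambda>n. (1 / (real n powr (-5/4) * ln (real n)) + 2) * (real n * (real n powr (-5/4) * ln (real n))) ^ 6) \<longlonglongrightarrow> 0"
  by real_asymp
lemma lim4: "(\<lambda>n. (real n powr (-3/4) / (real n powr (-5/4) * ln (real n))) / (sqrt (real n) / ln (real n) powr (1/20))) \<longlonglongrightarrow> 0"
  by real_asymp
lemma limK: "filterlim (\<lambda>n. sqrt (real n) / ln (real n) powr (1/20)) at_top sequentially"
  by real_asymp
lemma limB: "filterlim (\<lambda>n. real n / ln (real n) powr (1/39)) at_top sequentially"
  by real_asymp
lemma evln: "eventually (\<lambda>n. 1 \<le> ln (real n)) sequentially"
proof -
  have "filterlim (\<lambda>n. ln (real n)) at_top sequentially" by real_asymp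
  then show ?thesis unfolding filterlim_at_top by blast
qed

theorem lemma4:
  fixes m :: nat
  assumes "m \<ge> 1"
  shows "(\<lambda>n. measure (pa_space m n)
            {\<omega> \<in> space (pa_space m n).
               \<forall>j\<in>{1..n}. real (pa_degree m n \<omega> j) \<ge> sqrt (real n) / (ln (real n)) powr (1/20)
                 \<longrightarrow> real j \<le> real n / (ln (real n)) powr (1/39)})
         \<longlonglongrightarrow> 1"
  by (rule final_from_limits[OF assms lim1 lim2 lim3 lim4 limK limB evln])

end
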